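(* Let $1<\beta<\beta_*$, where $\beta_*\approx1.4656$ is the real root of $x^3-x^2-1=0$. Then $\mathbb P(D)=1$.
   Context: $\vec q_0=(0,0)$, $\vec q_1=(1,0)$, $\vec q_2=(0,1)$. Subsets of the plane (of the triangle with vertices $(0,0)$, $(\frac1{\beta-1},0)$, $(0,\frac1{\beta-1})$): $C_{01}=\{x\ge\frac1\beta,\ 0\le y<\frac1\beta,\ x+y\le\frac{1}{\beta(\beta-1)}\}$; $C_{12}=\{x\ge\frac1\beta,\ y\ge\frac1\beta,\ \frac{1}{\beta(\beta-1)}<x+y\le\frac{1}{\beta-1}\}$; $C_{02}=\{0\le x<\frac1\beta,\ y\ge\frac1\beta,\ x+y\le\frac{1}{\beta(\beta-1)}\}$; $C_{012}=\{x\ge\frac1\beta,\ y\ge\frac1\beta,\ x+y\le\frac{1}{\beta(\beta-1)}\}$; $C=C_{01}\cup C_{12}\cup C_{02}$. $\Upsilon=\{0,1,2\}^{\mathbb N}$ with its product $\sigma$-algebra and $\mathbb P$ the uniform product (Bernoulli $(1/3,1/3,1/3)$) measure. $D$ is the set of $(b_1,b_2,\ldots)\in\Upsilon$ such that $\sum_{i\ge1}\vec q_{b_{j+i-1}}\beta^{-i}\in C$ for infinitely many $j$ and $\sum_{i\ge1}\vec q_{b_{j+i-1}}\beta^{-i}\in C_{012}$ for infinitely many $j$. *)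

theory Defs
  imports "HOL-Probability.Probability"
begin

text \<open>The real root of x^3 - x^2 - 1 = 0 (unique real root, approx. 1.4656).\<close>
definition beta_star :: real where
  "beta_star = (THE x::real. x^3 - x^2 - 1 = 0)"

definition qvec :: "nat \<Rightarrow> real \<times> real" where
  "qvec d = (if d = 1 then (1, 0) else if d = 2 then (0, 1) else (0, 0))"

definition C01 :: "real \<Rightarrow> (real \<times> real) set" where
  "C01 \<beta> = {(x, y). x \<ge> 1/\<beta> \<and> 0 \<le> y \<and> y < 1/\<beta> \<and> x + y \<le> 1/(\<beta>*(\<beta>-1))}"

definition C12 :: "real \<Rightarrow> (real \<times> real) set" where
  "C12 \<beta> = {(x, y). x \<ge> 1/\<beta> \<and> y \<ge> 1/\<beta> \<and> 1/(\<beta>*(\<beta>-1)) < x + y \<and> x + y \<le> 1/(\<beta>-1)}"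

definition C02 :: "real \<Rightarrow> (real \<times> real) set" where
  "C02 \<beta> = {(x, y). 0 \<le> x \<and> x < 1/\<beta> \<and> y \<ge> 1/\<beta> \<and> x + y \<le> 1/(\<beta>*(\<beta>-1))}"

definition C012 :: "real \<Rightarrow> (real \<times> real) set" where
  "C012 \<beta> = {(x, y). x \<ge> 1/\<beta> \<and> y \<ge> 1/\<beta> \<and> x + y \<le> 1/(\<beta>*(\<beta>-1))}"

definition Cset :: "real \<Rightarrow> (real \<times> real) set" where
  "Cset \<beta> = C01 \<beta> \<union> C12 \<beta> \<union> C02 \<beta>"

text \<open>Upsilon = {0,1,2}^N with the uniform Bernoulli product measure.
  Sequences are indexed from 0: b k stands for b_{k+1} of the paper.\<close>
definition Ups :: "(nat \<Rightarrow> nat) measure" where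
  "Ups = PiM UNIV (\<lambda>_. uniform_count_measure {0, 1, 2::nat})"

definition proj_pt :: "real \<Rightarrow> (nat \<Rightarrow> nat) \<Rightarrow> nat \<Rightarrow> real \<times> real" where
  "proj_pt \<beta> b j = (\<Sum>i. (inverse (\<beta> ^ (i + 1))) *\<^sub>R qvec (b (j + i)))"

definition Dset :: "real \<Rightarrow> (nat \<Rightarrow> nat) set" where
  "Dset \<beta> = {b \<in> space Ups.
      infinite {j. proj_pt \<beta> b j \<in> Cset \<beta>} \<and> infinite {j. proj_pt \<beta> b j \<in> C012 \<beta>}}"

end

theory Submission
  imports Defs
begin


lemma cubic_neg_le1: "(x::real) \<le> 1 \<Longrightarrow> x^3 - x^2 - 1 < 0"
proof -
  assume "x \<le> 1"
  have "x^3 - x^2 = x^2 * (x - 1)" by (simp add: power2_eq_square power3_eq_cube algebra_simps)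
  also have "\<dots> \<le> 0" using \<open>x \<le> 1\<close> by (simp add: mult_nonneg_nonpos)
  finally show ?thesis by simp
qed

lemma cubic_mono: "1 \<le> (x::real) \<Longrightarrow> x < y \<Longrightarrow> x^3 - x^2 - 1 < y^3 - y^2 - 1"
proof -
  assume a: "1 \<le> x" "x < y"
  have e: "(y^3 - y^2 - 1) - (x^3 - x^2 - 1) = (y - x) * (y*(y-1) + x*(x-1) + x*y)"
    by (simp add: power2_eq_square power3_eq_cube algebra_simps)
  have "0 \<le> y*(y-1)" "0 \<le> x*(x-1)" "0 < x*y" using a by auto
  then have "0 < y*(y-1) + x*(x-1) + x*y" by linarith
  then have "0 < (y - x) * (y*(y-1) + x*(x-1) + x*y)" using a by (intro mult_pos_pos) auto
  with e show ?thesis by linarith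
qed

lemma beta_star_root: "beta_star^3 - beta_star^2 - 1 = 0"
proof -
  have ex: "\<exists>x::real. 1 \<le> x \<and> x \<le> 2 \<and> x^3 - x^2 - 1 = 0"
    by (rule IVT[of "\<lambda>x::real. x^3 - x^2 - 1"]) (auto intro!: continuous_intros)
  have "\<exists>!x::real. x^3 - x^2 - 1 = 0"
  proof -
    from ex obtain x :: real where x: "x^3 - x^2 - 1 = 0" by blast
    moreover have "y = x" if "y^3 - y^2 - 1 = 0" for y :: real
    proof -
      have "1 < x" using x cubic_neg_le1[of x] by force
      have "1 < y" using that cubic_neg_le1[of y] by force
      show ?thesis using cubic_mono[of x y] cubic_mono[of y x] \<open>1 < x\<close> \<open>1 < y\<close> x that
        by (cases "x < y"; cases "y < x") auto
    qed
    ultimately show ?thesis by blast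
  qed
  then show ?thesis unfolding beta_star_def by (rule theI')
qed

lemma beta_cubic: "1 < (\<beta>::real) \<Longrightarrow> \<beta> < beta_star \<Longrightarrow> \<beta>^3 - \<beta>^2 - 1 < 0"
  using cubic_mono[of \<beta> beta_star] beta_star_root by auto

lemma r_cubic:
  assumes "1 < (\<beta>::real)" "\<beta>^3 - \<beta>^2 - 1 < 0"
  shows "1 < inverse \<beta> + inverse \<beta> ^ 3"
proof -
  let ?r = "inverse \<beta>"
  have "0 < ?r^3" using assms by simp
  have "?r^3 * (\<beta>^3 - \<beta>^2 - 1) < 0" using assms by (simp add: mult_pos_neg)
  moreover have "?r^3 * (\<beta>^3 - \<beta>^2 - 1) = 1 - ?r - ?r^3" using assms
    by (simp add: power2_eq_square power3_eq_cube field_simps)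
  ultimately show ?thesis by linarith
qed

lemma geo_sums: "0 < (r::real) \<Longrightarrow> r < 1 \<Longrightarrow> (\<lambda>i. r^(i+1)) sums (r/(1-r))"
proof -
  assume "0 < r" "r < 1"
  then have "(\<lambda>i. r^i) sums (1/(1-r))" by (intro geometric_sums) simp
  from sums_mult[OF this, of r] show ?thesis by (simp add: field_simps)
qed

lemma geo_fin:
  fixes r T :: real assumes hT: "T - r*T = r"
  shows "(\<Sum>i<n. r^(i+1)) = T - r^n * T"
proof (induction n)
  case 0 then show ?case by simp
next
  case (Suc n)
  have "r^n*T - r^(Suc n)*T = r^n*(T - r*T)" by (simp add: algebra_simps)
  also have "\<dots> = r^(Suc n)" using hT by simp
  finally show ?case using Suc by simp
qed

lemma geo_int:
  fixes r T :: real assumes hT: "T - r*T = r"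
  shows "(\<Sum>i\<in>{a..<a+k}. r^(i+1)) = r^a * T - r^(a+k) * T"
proof (induction k)
  case 0 then show ?case by simp
next
  case (Suc k)
  have "r^(a+k)*T - r^(a + Suc k)*T = r^(a+k)*(T - r*T)" by (simp add: algebra_simps)
  also have "\<dots> = r^(a + Suc k)" using hT by simp
  finally show ?case using Suc by simp
qed

lemma coef_bounds:
  fixes r :: real and c :: "nat \<Rightarrow> real"
  assumes r: "0 < r" "r < 1" and c: "\<And>i. 0 \<le> c i" "\<And>i. c i \<le> 1" and A: "finite A"
  shows "summable (\<lambda>i. r^(i+1) * c i)"
    and "0 \<le> (\<Sum>i. r^(i+1) * c i)"
    and "(\<forall>i\<in>A. c i = 1) \<Longrightarrow> (\<Sum>i\<in>A. r^(i+1)) \<le> (\<Sum>i. r^(i+1) * c i)"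
    and "(\<forall>i\<in>A. c i = 0) \<Longrightarrow> (\<Sum>i. r^(i+1) * c i) \<le> r/(1-r) - (\<Sum>i\<in>A. r^(i+1))"
proof -
  have g: "(\<lambda>i. r^(i+1)) sums (r/(1-r))" using geo_sums r by blast
  show s: "summable (\<lambda>i. r^(i+1) * c i)"
    by (rule summable_comparison_test'[OF sums_summable[OF g], of 0]) (use r c in \<open>auto intro: mult_left_le\<close>)
  have nn: "0 \<le> r^(i+1) * c i" for i using r c by simp
  show "0 \<le> (\<Sum>i. r^(i+1) * c i)" by (rule suminf_nonneg[OF s nn])
  show "(\<Sum>i\<in>A. r^(i+1)) \<le> (\<Sum>i. r^(i+1) * c i)" if h: "\<forall>i\<in>A. c i = 1"
  proof -
    have "(\<Sum>i\<in>A. r^(i+1)) = (\<Sum>i\<in>A. r^(i+1) * c i)" using h by simp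
    also have "\<dots> \<le> (\<Sum>i. r^(i+1) * c i)" by (rule sum_le_suminf[OF s A]) (blast intro: nn)
    finally show ?thesis .
  qed
  show "(\<Sum>i. r^(i+1) * c i) \<le> r/(1-r) - (\<Sum>i\<in>A. r^(i+1))" if h: "\<forall>i\<in>A. c i = 0"
  proof -
    have d: "(\<lambda>i. r^(i+1) - r^(i+1) * c i) sums (r/(1-r) - (\<Sum>i. r^(i+1) * c i))"
      by (rule sums_diff[OF g summable_sums[OF s]])
    have nn2: "0 \<le> r^(i+1) - r^(i+1) * c i" for i using r c mult_left_le[of "c i" "r^(i+1)"] by simp
    have "(\<Sum>i\<in>A. r^(i+1)) = (\<Sum>i\<in>A. r^(i+1) - r^(i+1) * c i)" using h by simp
    also have "\<dots> \<le> (\<Sum>i. r^(i+1) - r^(i+1) * c i)" by (rule sum_le_suminf[OF sums_summable[OF d] A]) (blast intro: nn2)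
    also have "\<dots> = r/(1-r) - (\<Sum>i. r^(i+1) * c i)" using d by (simp add: sums_iff)
    finally show ?thesis by linarith
  qed
qed



lemma inv_lt1: "1 < (\<beta>::real) \<Longrightarrow> 0 < inverse \<beta> \<and> inverse \<beta> < 1"
  using less_imp_inverse_less[of 1 \<beta>] by simp

lemma qvec_fst: "fst (qvec d) = (if d = 1 then 1 else 0)" by (simp add: qvec_def)
lemma qvec_snd: "snd (qvec d) = (if d = 2 then 1 else 0)" by (simp add: qvec_def)
lemma qvec_norm: "norm (qvec d) \<le> 1" by (simp add: qvec_def)

lemma proj_summable:
  assumes "1 < \<beta>"
  shows "summable (\<lambda>i. inverse (\<beta> ^ (i + 1)) *\<^sub>R qvec (b (j + i)))"
proof -
  have r: "0 < inverse \<beta>" "inverse \<beta> < 1" using inv_lt1[OF assms] by auto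
  have g: "summable (\<lambda>i. (inverse \<beta>)^(i+1))" using sums_summable[OF geo_sums[OF r]] .
  show ?thesis
  proof (rule summable_comparison_test'[OF g, of 0])
    fix n :: nat
    have "norm (inverse (\<beta> ^ (n + 1)) *\<^sub>R qvec (b (j + n))) = inverse (\<beta> ^ (n + 1)) * norm (qvec (b (j + n)))"
      using assms by simp
    also have "\<dots> \<le> inverse (\<beta> ^ (n + 1))" using qvec_norm[of "b (j+n)"] assms
      by (intro mult_left_le) auto
    finally show "norm (inverse (\<beta> ^ (n + 1)) *\<^sub>R qvec (b (j + n))) \<le> (inverse \<beta>)^(n+1)"
      by (simp add: power_inverse)
  qed
qed

lemma proj_fst:
  assumes "1 < \<beta>"
  shows "fst (proj_pt \<beta> b j) = (\<Sum>i. (inverse \<beta>)^(i+1) * fst (qvec (b (j + i))))"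
  unfolding proj_pt_def
  by (subst bounded_linear.suminf[OF bounded_linear_fst proj_summable[OF assms]]) (simp add: power_inverse)

lemma proj_snd:
  assumes "1 < \<beta>"
  shows "snd (proj_pt \<beta> b j) = (\<Sum>i. (inverse \<beta>)^(i+1) * snd (qvec (b (j + i))))"
  unfolding proj_pt_def
  by (subst bounded_linear.suminf[OF bounded_linear_snd proj_summable[OF assms]]) (simp add: power_inverse)

lemma proj_sum:
  assumes "1 < \<beta>"
  shows "fst (proj_pt \<beta> b j) + snd (proj_pt \<beta> b j) = (\<Sum>i. (inverse \<beta>)^(i+1) * (fst (qvec (b (j + i))) + snd (qvec (b (j + i)))))"
proof -
  have r: "0 < inverse \<beta>" "inverse \<beta> < 1" using inv_lt1[OF assms] by auto
  have s1: "summable (\<lambda>i. (inverse \<beta>)^(i+1) * fst (qvec (b (j + i))))"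
    by (rule coef_bounds(1)[OF r, where A="{}"]) (auto simp: qvec_fst)
  have s2: "summable (\<lambda>i. (inverse \<beta>)^(i+1) * snd (qvec (b (j + i))))"
    by (rule coef_bounds(1)[OF r, where A="{}"]) (auto simp: qvec_snd)
  show ?thesis unfolding proj_fst[OF assms] proj_snd[OF assms] suminf_add[OF s1 s2]
    by (simp add: algebra_simps)
qed

lemma pattern_pts:
  fixes \<beta> :: real
  assumes b1: "1 < \<beta>" and rc: "1 < inverse \<beta> + inverse \<beta> ^ 3"
    and N1: "(inverse \<beta>)^N < inverse \<beta> + inverse \<beta> ^ 3 - 1" and N2: "(inverse \<beta>)^N < 1 - inverse \<beta>"
    and p0: "b j = 1" and p1: "b (j+1) = 2" and p2: "b (j+2) = 2" and pz: "\<And>k. k < N \<Longrightarrow> b (j+3+k) = 0"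
  shows "proj_pt \<beta> b j \<in> C012 \<beta>" "proj_pt \<beta> b (j+1) \<in> C02 \<beta>"
proof -
  define r where "r = inverse \<beta>"
  define T where "T = r / (1 - r)"
  have r: "0 < r" "r < 1" using inv_lt1[OF b1] unfolding r_def by auto
  have h0: "T * (1 - r) = r" using r unfolding T_def by simp
  have hT: "T - r*T = r" using h0 by (simp add: algebra_simps)
  have Tpos: "0 < T" using r unfolding T_def by simp
  have e1: "1/\<beta> = r" unfolding r_def by (simp add: divide_inverse)
  have e2: "1/(\<beta>*(\<beta>-1)) = r * T" using b1 unfolding T_def r_def by (simp add: field_simps)
  have rc': "1 < r + r^3" and N1': "r^N < r + r^3 - 1" and N2': "r^N < 1 - r" using rc N1 N2 unfolding r_def by auto
  have r23: "r^3 \<le> r^2" by (rule power_decreasing) (use r in auto)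
  have rN2: "r^(N+2) \<le> r^N" "r^(N+3) \<le> r^N" by (rule power_decreasing; use r in auto)+
  have cfb: "0 \<le> fst (qvec d)" "fst (qvec d) \<le> 1" "0 \<le> snd (qvec d)" "snd (qvec d) \<le> 1"
     "0 \<le> fst (qvec d) + snd (qvec d)" "fst (qvec d) + snd (qvec d) \<le> 1" for d
    by (auto simp: qvec_def)
  note CB = coef_bounds[OF r]
  let ?cx = "\<lambda>i. fst (qvec (b (j + i)))"
  let ?cy = "\<lambda>i. snd (qvec (b (j + i)))"
  let ?cs = "\<lambda>i. fst (qvec (b (j + i))) + snd (qvec (b (j + i)))"
  have X1: "r \<le> fst (proj_pt \<beta> b j)"
  proof -
    have "(\<Sum>i\<in>{0}. r^(i+1)) \<le> (\<Sum>i. r^(i+1) * ?cx i)"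
      by (rule CB(3)) (use p0 cfb in \<open>auto simp: qvec_def\<close>)
    then show ?thesis unfolding proj_fst[OF b1] r_def by simp
  qed
  have Y1: "r \<le> snd (proj_pt \<beta> b j)"
  proof -
    have "(\<Sum>i\<in>{1,2}. r^(i+1)) \<le> (\<Sum>i. r^(i+1) * ?cy i)"
      by (rule CB(3)) (use p1 p2 cfb in \<open>auto simp: qvec_def\<close>)
    moreover have "(\<Sum>i\<in>{1,2}. r^(i+1)) = r * (r + r^2)" by (simp add: power2_eq_square power3_eq_cube algebra_simps)
    moreover have "r \<le> r * (r + r^2)"
    proof -
      have "1 \<le> r + r^2" using rc' r23 by linarith
      from mult_left_mono[OF this, of r] r show ?thesis by simp
    qed
    ultimately show ?thesis unfolding proj_snd[OF b1] r_def by linarith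
  qed
  have S1: "fst (proj_pt \<beta> b j) + snd (proj_pt \<beta> b j) \<le> r * T"
  proof -
    have "(\<Sum>i. r^(i+1) * ?cs i) \<le> r/(1-r) - (\<Sum>i\<in>{3..<3+N}. r^(i+1))"
      by (rule CB(4)) (use pz cfb in \<open>auto simp: qvec_def add.assoc dest!: le_Suc_ex\<close>)
    also have "\<dots> = T - (r^3 * T - r^(3+N) * T)" unfolding geo_int[OF hT] T_def ..
    also have "\<dots> \<le> r * T"
    proof -
      have "(1 - r^3 + r^(3+N) - r) * T \<le> 0" using N1' rN2 Tpos by (intro mult_nonpos_nonneg) (auto simp: add.commute)
      then show ?thesis by (simp add: algebra_simps)
    qed
    finally show ?thesis unfolding proj_sum[OF b1] r_def by simp
  qed
  show "proj_pt \<beta> b j \<in> C012 \<beta>" unfolding C012_def using X1 Y1 S1 e1 e2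
    by (cases "proj_pt \<beta> b j") auto
  let ?dx = "\<lambda>i. fst (qvec (b (j + 1 + i)))"
  let ?dy = "\<lambda>i. snd (qvec (b (j + 1 + i)))"
  let ?ds = "\<lambda>i. fst (qvec (b (j + 1 + i))) + snd (qvec (b (j + 1 + i)))"
  have X2: "fst (proj_pt \<beta> b (j+1)) < r"
  proof -
    have "(\<Sum>i. r^(i+1) * ?dx i) \<le> r/(1-r) - (\<Sum>i\<in>{0..<0+(N+2)}. r^(i+1))"
    proof (rule CB(4))
      show "\<forall>i\<in>{0..<0+(N+2)}. ?dx i = 0"
      proof
        fix i assume "i \<in> {0..<0+(N+2)}"
        then have i: "i < N + 2" by simp
        have "b (j+1+i) \<noteq> 1"
        proof (cases "i < 2")
          case True then have "i = 0 \<or> i = 1" by auto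
          then show ?thesis using p1 p2 by (auto simp: add.assoc)
        next
          case False
          then obtain k where k: "i = 2 + k" using le_Suc_ex[of 2 i] by auto
          then have kN: "k < N" using i by simp
          have e: "j+1+i = j+3+k" using k by simp
          have "b (j+1+i) = 0" unfolding e by (rule pz[OF kN])
          then show ?thesis by simp
        qed
        then show "?dx i = 0" by (simp add: qvec_fst)
      qed
    qed (use cfb in auto)
    also have "\<dots> = T - (r^0 * T - r^(0+(N+2)) * T)" unfolding geo_int[OF hT] T_def ..
    also have "\<dots> = r^(N+2) * T" by simp
    also have "\<dots> < r"
    proof -
      have "r^(N+2) * T * (1 - r) = r^(N+2) * r" unfolding T_def using r by simp
      also have "\<dots> < (1 - r) * r"
      proof -
        have "r^(N+2) < 1 - r" using N2' rN2(1) by linarith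
        from mult_strict_right_mono[OF this r(1)] show ?thesis .
      qed
      finally show ?thesis using r by (simp add: mult.commute)
    qed
    finally show ?thesis unfolding proj_fst[OF b1] r_def by simp
  qed
  have X2': "0 \<le> fst (proj_pt \<beta> b (j+1))"
    unfolding proj_fst[OF b1] r_def[symmetric] by (rule CB(2)[where A="{}"]) (use cfb in auto)
  have Y2: "r \<le> snd (proj_pt \<beta> b (j+1))"
  proof -
    have "(\<Sum>i\<in>{0}. r^(i+1)) \<le> (\<Sum>i. r^(i+1) * ?dy i)"
      by (rule CB(3)) (use p1 cfb in \<open>auto simp: qvec_def\<close>)
    then show ?thesis unfolding proj_snd[OF b1] r_def by simp
  qed
  have S2: "fst (proj_pt \<beta> b (j+1)) + snd (proj_pt \<beta> b (j+1)) \<le> r * T"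
  proof -
    have "(\<Sum>i. r^(i+1) * ?ds i) \<le> r/(1-r) - (\<Sum>i\<in>{2..<2+N}. r^(i+1))"
    proof (rule CB(4))
      show "\<forall>i\<in>{2..<2+N}. ?ds i = 0"
      proof
        fix i assume "i \<in> {2..<2+N}"
        then obtain k where k: "i = 2 + k" "k < N" using le_Suc_ex[of 2 i] by auto
        have e: "j+1+i = j+3+k" using k by simp
        have "b (j+1+i) = 0" unfolding e by (rule pz[OF k(2)])
        then show "?ds i = 0" by (simp add: qvec_def)
      qed
    qed (use cfb in auto)
    also have "\<dots> = T - (r^2 * T - r^(2+N) * T)" unfolding geo_int[OF hT] T_def ..
    also have "\<dots> \<le> r * T"
    proof -
      have "(1 - r^2 + r^(2+N) - r) * T \<le> 0" using N1' rN2 r23 Tpos by (intro mult_nonpos_nonneg) (auto simp: add.commute)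
      then show ?thesis by (simp add: algebra_simps)
    qed
    finally show ?thesis unfolding proj_sum[OF b1] r_def by simp
  qed
  show "proj_pt \<beta> b (j+1) \<in> C02 \<beta>" unfolding C02_def using X2 X2' Y2 S2 e1 e2
    by (cases "proj_pt \<beta> b (j+1)") auto
qed



lemma space_Ups: "space Ups = {b. \<forall>i. b i \<in> {0,1,2}}"
  unfolding Ups_def by (simp add: space_PiM space_uniform_count_measure PiE_UNIV_domain Pi_def)

lemma qvec_meas: "qvec \<in> measurable (uniform_count_measure {0,1,2}) borel"
  by (simp add: measurable_def sets_uniform_count_measure space_uniform_count_measure)

lemma proj_meas[measurable]: "(\<lambda>b. proj_pt \<beta> b j) \<in> borel_measurable Ups"
proof -
  have "(\<lambda>b. qvec (b (j+i))) \<in> borel_measurable Ups" for i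
    unfolding Ups_def by (intro measurable_compose[OF _ qvec_meas] measurable_component_singleton) simp
  then show ?thesis unfolding proj_pt_def by measurable
qed

lemma memC01: "p \<in> C01 \<beta> \<longleftrightarrow> fst p \<ge> 1/\<beta> \<and> 0 \<le> snd p \<and> snd p < 1/\<beta> \<and> fst p + snd p \<le> 1/(\<beta>*(\<beta>-1))"
  by (cases p) (simp add: C01_def)
lemma memC12: "p \<in> C12 \<beta> \<longleftrightarrow> fst p \<ge> 1/\<beta> \<and> snd p \<ge> 1/\<beta> \<and> 1/(\<beta>*(\<beta>-1)) < fst p + snd p \<and> fst p + snd p \<le> 1/(\<beta>-1)"
  by (cases p) (simp add: C12_def)
lemma memC02: "p \<in> C02 \<beta> \<longleftrightarrow> 0 \<le> fst p \<and> fst p < 1/\<beta> \<and> snd p \<ge> 1/\<beta> \<and> fst p + snd p \<le> 1/(\<beta>*(\<beta>-1))"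
  by (cases p) (simp add: C02_def)
lemma memC012: "p \<in> C012 \<beta> \<longleftrightarrow> fst p \<ge> 1/\<beta> \<and> snd p \<ge> 1/\<beta> \<and> fst p + snd p \<le> 1/(\<beta>*(\<beta>-1))"
  by (cases p) (simp add: C012_def)

lemma fst_borel: "(fst :: real\<times>real \<Rightarrow> real) \<in> borel_measurable borel"
  by (intro borel_measurable_continuous_onI continuous_on_fst continuous_on_id)
lemma snd_borel: "(snd :: real\<times>real \<Rightarrow> real) \<in> borel_measurable borel"
  by (intro borel_measurable_continuous_onI continuous_on_snd continuous_on_id)
lemma projfst_meas[measurable]: "(\<lambda>b. fst (proj_pt \<beta> b j)) \<in> borel_measurable Ups"
  by (rule measurable_compose[OF proj_meas fst_borel])
lemma projsnd_meas[measurable]: "(\<lambda>b. snd (proj_pt \<beta> b j)) \<in> borel_measurable Ups"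
  by (rule measurable_compose[OF proj_meas snd_borel])

lemma Dset_meas: "Dset \<beta> \<in> sets Ups"
proof -
  have "Dset \<beta> = {b \<in> space Ups. (\<forall>m. \<exists>j\<ge>m. proj_pt \<beta> b j \<in> Cset \<beta>) \<and> (\<forall>m. \<exists>j\<ge>m. proj_pt \<beta> b j \<in> C012 \<beta>)}"
    unfolding Dset_def by (simp add: infinite_nat_iff_unbounded_le)
  also have "\<dots> \<in> sets Ups"
    unfolding Cset_def Un_iff memC01 memC12 memC02 memC012 by measurable
  finally show ?thesis .
qed



abbreviation "M0 \<equiv> uniform_count_measure {0,1,2::nat}"

lemma M0_prob: "prob_space M0"
  by (rule prob_space_uniform_count_measure) auto

lemma pps: "product_prob_space (\<lambda>_::nat. M0)"
  by (intro product_prob_space.intro product_sigma_finite.intro product_prob_space_axioms.intro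
      prob_space_imp_sigma_finite M0_prob)

lemma Ups_prob: "prob_space Ups"
  unfolding Ups_def by (rule prob_space_PiM) (rule M0_prob)

definition Wf :: "nat \<Rightarrow> nat \<Rightarrow> nat" where
  "Wf N i = (if i mod (N+3) = 0 then 1 else if i mod (N+3) \<le> 2 then 2 else 0)"

lemma Wf_range: "Wf N i \<in> {0,1,2}" by (simp add: Wf_def)

lemma cyl_meas:
  assumes "finite U"
  shows "measure Ups {b \<in> space Ups. \<forall>i\<in>U. b i = Wf N i} = (1/3)^card U"
proof -
  interpret P: product_prob_space "\<lambda>_::nat. M0" UNIV by (rule pps)
  have e: "{b \<in> space Ups. \<forall>i\<in>U. b i = Wf N i} = prod_emb UNIV (\<lambda>_. M0) U (Pi\<^sub>E U (\<lambda>i. {Wf N i}))"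
    unfolding prod_emb_def Ups_def by (auto simp: space_PiM Pi_iff)
  have "measure Ups (prod_emb UNIV (\<lambda>_. M0) U (Pi\<^sub>E U (\<lambda>i. {Wf N i}))) = (\<Prod>i\<in>U. measure M0 {Wf N i})"
    unfolding Ups_def
    by (rule P.measure_PiM_emb) (use assms Wf_range in \<open>auto simp: sets_uniform_count_measure\<close>)
  also have "\<dots> = (\<Prod>i\<in>U. 1/3)"
    by (intro prod.cong refl) (use Wf_range in \<open>simp add: measure_uniform_count_measure\<close>)
  finally show ?thesis using e by simp
qed

lemma cyl_sets:
  assumes "finite U"
  shows "{b \<in> space Ups. \<forall>i\<in>U. b i = Wf N i} \<in> sets Ups"
proof -
  have e: "{b \<in> space Ups. \<forall>i\<in>U. b i = Wf N i} = prod_emb UNIV (\<lambda>_. M0) U (Pi\<^sub>E U (\<lambda>i. {Wf N i}))"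
    unfolding prod_emb_def Ups_def by (auto simp: space_PiM Pi_iff)
  show ?thesis unfolding e unfolding Ups_def
    by (rule sets_PiM_I) (use assms Wf_range in \<open>auto simp: sets_uniform_count_measure\<close>)
qed

definition blk :: "nat \<Rightarrow> nat \<Rightarrow> nat set" where
  "blk N k = {k*(N+3)..<k*(N+3)+(N+3)}"

definition Aev :: "nat \<Rightarrow> nat \<Rightarrow> (nat \<Rightarrow> nat) set" where
  "Aev N k = {b \<in> space Ups. \<forall>i\<in>blk N k. b i = Wf N i}"

lemma blk_disj: "k \<noteq> k' \<Longrightarrow> blk N k \<inter> blk N k' = {}"
proof -
  have *: "blk N k \<inter> blk N k' = {}" if "k < k'" for k k'
  proof -
    have "Suc k * (N+3) \<le> k' * (N+3)" using that by (intro mult_le_mono1) simp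
    then show ?thesis unfolding blk_def by auto
  qed
  assume "k \<noteq> k'"
  then show ?thesis using *[of k k'] *[of k' k] by (cases "k < k'") (auto simp: Int_commute)
qed

lemma Aev_sets: "Aev N k \<in> sets Ups"
  unfolding Aev_def blk_def by (rule cyl_sets) simp

lemma Aev_prob: "measure Ups (Aev N k) = (1/3)^(N+3)"
  unfolding Aev_def blk_def by (subst cyl_meas) auto

lemma Aev_indep: "prob_space.indep_events Ups (Aev N) UNIV"
proof -
  interpret P: prob_space Ups by (rule Ups_prob)
  show ?thesis unfolding P.indep_events_def
  proof (intro conjI allI impI)
    show "Aev N ` UNIV \<subseteq> P.events" using Aev_sets by auto
    fix J :: "nat set" assume J: "J \<subseteq> UNIV" "J \<noteq> {}" "finite J"
    let ?U = "\<Union>k\<in>J. blk N k"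
    have fin: "finite ?U" using J by (auto simp: blk_def)
    have "(\<Inter>k\<in>J. Aev N k) = {b \<in> space Ups. \<forall>i\<in>?U. b i = Wf N i}"
      using J(2) unfolding Aev_def by blast
    then have "P.prob (\<Inter>k\<in>J. Aev N k) = (1/3)^card ?U" using cyl_meas[OF fin] by simp
    also have "card ?U = (\<Sum>k\<in>J. card (blk N k))"
    proof -
      have d: "\<forall>i\<in>J. \<forall>j\<in>J. i \<noteq> j \<longrightarrow> blk N i \<inter> blk N j = {}" using blk_disj by blast
      have f: "\<forall>i\<in>J. finite (blk N i)" by (simp add: blk_def)
      show ?thesis by (rule card_UN_disjoint[OF J(3) f d])
    qed
    also have "\<dots> = card J * (N+3)" by (simp add: blk_def)
    also have "(1/3::real)^(card J * (N+3)) = (\<Prod>k\<in>J. P.prob (Aev N k))"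
    proof -
      have "(1/3::real)^(card J * (N+3)) = ((1/3)^(N+3))^card J" by (metis power_mult mult.commute)
      then show ?thesis by (simp add: Aev_prob)
    qed
    finally show "P.prob (\<Inter>k\<in>J. Aev N k) = (\<Prod>k\<in>J. P.prob (Aev N k))" .
  qed
qed

lemma Aev_ae: "AE b in Ups. \<forall>m. \<exists>k\<ge>m. b \<in> Aev N k"
proof -
  interpret P: prob_space Ups by (rule Ups_prob)
  define p :: real where "p = (1/3)^(N+3)"
  have p: "0 < p" "p \<le> 1" unfolding p_def by (auto simp: power_le_one)
  have ind2: "P.indep_sets (\<lambda>k. sigma_sets (space Ups) {Aev N k}) UNIV"
    by (rule P.indep_sets_sigma[OF Aev_indep[unfolded P.indep_events_def_alt]]) (simp add: Int_stable_def)
  have cmp: "P.prob (\<Inter>k\<in>J. space Ups - Aev N k) = (1 - p)^card J" if J: "J \<noteq> {}" "finite J" for J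
  proof -
    have "P.prob (\<Inter>k\<in>J. space Ups - Aev N k) = (\<Prod>k\<in>J. P.prob (space Ups - Aev N k))"
    proof -
      have mem: "(\<lambda>k. space Ups - Aev N k) \<in> Pi J (\<lambda>k. sigma_sets (space Ups) {Aev N k})"
        by (intro Pi_I sigma_sets.Compl sigma_sets.Basic) simp
      from ind2 J have H: "\<forall>A\<in>Pi J (\<lambda>k. sigma_sets (space Ups) {Aev N k}). P.prob (\<Inter>j\<in>J. A j) = (\<Prod>j\<in>J. P.prob (A j))"
        unfolding P.indep_sets_def by blast
      show ?thesis using bspec[OF H mem] by simp
    qed
    also have "\<dots> = (\<Prod>k\<in>J. 1 - p)"
      by (intro prod.cong refl) (simp add: P.prob_compl Aev_sets Aev_prob p_def)
    finally show ?thesis by simp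
  qed
  have "AE b in Ups. \<exists>k\<ge>m. b \<in> Aev N k" for m
  proof (rule AE_I')
    let ?E = "\<Inter>k\<in>{m..}. space Ups - Aev N k"
    show "{b \<in> space Ups. \<not> (\<exists>k\<ge>m. b \<in> Aev N k)} \<subseteq> ?E" by auto
    have Es: "?E \<in> sets Ups" using Aev_sets by auto
    have le: "P.prob ?E \<le> (1 - p)^n" for n
    proof (cases "n = 0")
      case True then show ?thesis by simp
    next
      case False
      have "P.prob ?E \<le> P.prob (\<Inter>k\<in>{m..<m+n}. space Ups - Aev N k)"
        by (rule P.finite_measure_mono) (use Aev_sets False in auto)
      also have "\<dots> = (1 - p)^n" using False by (subst cmp) auto
      finally show ?thesis .
    qed
    have "P.prob ?E \<le> 0"
    proof (rule ccontr)
      assume "\<not> P.prob ?E \<le> 0"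
      then have "0 < P.prob ?E" by simp
      from real_arch_pow_inv[OF this, of "1 - p"] p obtain n where "(1-p)^n < P.prob ?E" by auto
      with le[of n] show False by simp
    qed
    then have "P.prob ?E = 0" using measure_nonneg[of Ups ?E] by linarith
    then show "?E \<in> null_sets Ups" using Es by (simp add: P.emeasure_eq_measure null_setsI)
  qed
  then show ?thesis by (simp add: AE_all_countable)
qed



lemma Wf_shift: "t < N+3 \<Longrightarrow> Wf N (k*(N+3)+t) = (if t = 0 then 1 else if t \<le> 2 then 2 else 0)"
  by (simp add: Wf_def)

lemma pointwise:
  fixes \<beta> :: real
  assumes b1: "1 < \<beta>" and rc: "1 < inverse \<beta> + inverse \<beta> ^ 3"
    and N1: "(inverse \<beta>)^N < inverse \<beta> + inverse \<beta> ^ 3 - 1" and N2: "(inverse \<beta>)^N < 1 - inverse \<beta>"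
    and bs: "b \<in> space Ups" and inf: "\<forall>m. \<exists>k\<ge>m. b \<in> Aev N k"
  shows "b \<in> Dset \<beta>"
proof -
  let ?K = "{k. b \<in> Aev N k}"
  have Kinf: "infinite ?K" using inf by (simp add: infinite_nat_iff_unbounded_le)
  have key: "proj_pt \<beta> b (k*(N+3)) \<in> C012 \<beta> \<and> proj_pt \<beta> b (k*(N+3)+1) \<in> C02 \<beta>" if k: "k \<in> ?K" for k
  proof -
    have W: "b (k*(N+3)+t) = Wf N (k*(N+3)+t)" if "t < N+3" for t
      using k that unfolding Aev_def blk_def by auto
    have p0: "b (k*(N+3)) = 1" using W[of 0] Wf_shift[of 0 N k] by simp
    have p1: "b (k*(N+3)+1) = 2" using W[of 1] Wf_shift[of 1 N k] by simp
    have p2: "b (k*(N+3)+2) = 2" using W[of 2] Wf_shift[of 2 N k] by simp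
    have pz: "b (k*(N+3)+3+t) = 0" if "t < N" for t
      using W[of "3+t"] Wf_shift[of "3+t" N k] that by (simp add: add.assoc)
    show ?thesis using pattern_pts[OF b1 rc N1 N2 p0 p1 p2 pz] by simp
  qed
  have i1: "inj_on (\<lambda>k. k*(N+3)) ?K" by (auto simp: inj_on_def)
  have i2: "inj_on (\<lambda>k. k*(N+3)+1) ?K" by (auto simp: inj_on_def)
  have "(\<lambda>k. k*(N+3)) ` ?K \<subseteq> {j. proj_pt \<beta> b j \<in> C012 \<beta>}" using key by auto
  moreover have "infinite ((\<lambda>k. k*(N+3)) ` ?K)" using Kinf finite_imageD[OF _ i1] by blast
  ultimately have c1: "infinite {j. proj_pt \<beta> b j \<in> C012 \<beta>}" using infinite_super by blast
  have "(\<lambda>k. k*(N+3)+1) ` ?K \<subseteq> {j. proj_pt \<beta> b j \<in> Cset \<beta>}" using key by (auto simp: Cset_def)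
  moreover have "infinite ((\<lambda>k. k*(N+3)+1) ` ?K)" using Kinf finite_imageD[OF _ i2] by blast
  ultimately have c2: "infinite {j. proj_pt \<beta> b j \<in> Cset \<beta>}" using infinite_super by blast
  show ?thesis unfolding Dset_def using bs c1 c2 by blast
qed

theorem lemma4p5:
  fixes \<beta> :: real
  assumes "1 < \<beta>" and "\<beta> < beta_star"
  shows "measure Ups (Dset \<beta>) = 1"
proof -
  interpret P: prob_space Ups by (rule Ups_prob)
  have rc: "1 < inverse \<beta> + inverse \<beta> ^ 3" using r_cubic[OF assms(1) beta_cubic[OF assms]] .
  have r: "0 < inverse \<beta>" "inverse \<beta> < 1" using inv_lt1[OF assms(1)] by auto
  have mpos: "0 < min (inverse \<beta> + inverse \<beta> ^ 3 - 1) (1 - inverse \<beta>)" using rc r by simp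
  obtain N where N: "(inverse \<beta>)^N < min (inverse \<beta> + inverse \<beta> ^ 3 - 1) (1 - inverse \<beta>)"
    using real_arch_pow_inv[OF mpos r(2)] by blast
  have N1: "(inverse \<beta>)^N < inverse \<beta> + inverse \<beta> ^ 3 - 1" and N2: "(inverse \<beta>)^N < 1 - inverse \<beta>"
    using N by auto
  have "AE b in Ups. b \<in> Dset \<beta>"
    using Aev_ae[of N]
  proof (rule AE_mp)
    show "AE b in Ups. (\<forall>m. \<exists>k\<ge>m. b \<in> Aev N k) \<longrightarrow> b \<in> Dset \<beta>"
      by (rule AE_I2) (use pointwise[OF assms(1) rc N1 N2] in blast)
  qed
  then show ?thesis using P.prob_eq_1[OF Dset_meas] by simp
qed

end
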